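(* Let $P$ be an $n\times l$ matrix over $\mathbb{F}_2$ and let $\theta\in\mathbb{R}$. Then \[ \langle \mathbf{0}|\exp(i\theta \mathbf{H}_P)|\mathbf{0}\rangle=\alpha_{(P,\theta)}, \] and for every nonzero $\mathbf{x}\in\mathbb{F}_2^l$, \[ \langle \mathbf{x}|\exp(i\theta \mathbf{H}_P)|\mathbf{0}\rangle=\alpha_{(P\top\mathbf{x},\theta)}-\alpha_{(P,\theta)}. \]
   Context: For an $n\times l$ binary matrix $P$ with rows $P_1,\dots,P_n\in\mathbb{F}_2^l$, the Hamiltonian on $l$ qubits is $\mathbf{H}_P=\sum_{a=1}^n\prod_{b=1}^l X_b^{P_{ab}}$, where $X_b$ is the Pauli $X$ operator on qubit $b$; $|\mathbf{x}\rangle$ denotes the computational basis state labelled by $\mathbf{x}\in\mathbb{F}_2^l$. The code $\mathcal{C}(P)\subseteq\mathbb{F}_2^n$ is the span of the columns of $P$; its rank $r$ is the rank of $P$ (so $|\mathcal{C}(P)|=2^r$), and $n$ is its length. The weight enumerator is $W_{\mathcal{C}}(\zeta)=\sum_{\mathbf{c}\in\mathcal{C}}\zeta^{|\mathbf{c}|}$, with $|\mathbf{c}|$ the Hamming weight. Define $\alpha_{(P,\theta)}=2^{-r}e^{i\theta n}W_{\mathcal{C}(P)}(e^{-2i\theta})$. For nonzero $\mathbf{x}\in\mathbb{F}_2^l$, the projection $P\top\mathbf{x}$ is the $n\times l$ matrix obtained from $P$ by replacing each row $\mathbf{a}$ by whichever of $\mathbf{a}$, $\mathbf{a}+\mathbf{x}$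 is lexicographically first. *)

theory Defs
  imports Complex_Main
begin

text \<open>Vectors in F_2^m are bool lists of length m (True = 1). An n x l binary
matrix P is a list of n rows, each a bool list of length l.\<close>

definition vadd :: "bool list \<Rightarrow> bool list \<Rightarrow> bool list" where
  "vadd u v = map2 (\<lambda>a b. a \<noteq> b) u v"

definition zerovec :: "nat \<Rightarrow> bool list" where
  "zerovec l = replicate l False"

definition hweight :: "bool list \<Rightarrow> nat" where
  "hweight c = length (filter id c)"

text \<open>States are functions F_2^l -> complex (amplitudes on computational basis).
 The operator prod_b X_b^{P_ab} maps |y> to |y + P_a>; hence
 (H_P psi)(y) = sum_a psi(y + P_a).\<close>
definition hamil :: "bool list list \<Rightarrow> (bool list \<Rightarrow> complex) \<Rightarrow> (bool list \<Rightarrow> complex)" where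
  "hamil P \<psi> = (\<lambda>y. \<Sum>a<length P. \<psi> (vadd y (P ! a)))"

definition ket :: "bool list \<Rightarrow> (bool list \<Rightarrow> complex)" where
  "ket x = (\<lambda>y. if y = x then 1 else 0)"

definition exp_iH :: "bool list list \<Rightarrow> real \<Rightarrow> (bool list \<Rightarrow> complex) \<Rightarrow> (bool list \<Rightarrow> complex)" where
  "exp_iH P \<theta> \<psi> = (\<lambda>y. \<Sum>k. (\<i> * of_real \<theta>) ^ k / of_nat (fact k) * ((hamil P ^^ k) \<psi>) y)"

definition amp :: "nat \<Rightarrow> bool list list \<Rightarrow> real \<Rightarrow> bool list \<Rightarrow> complex" where
  "amp l P \<theta> x = exp_iH P \<theta> (ket (zerovec l)) x"

text \<open>Code C(P): the F_2-span of the columns of P, i.e. all vectors P c, c in F_2^l.\<close>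
definition code :: "nat \<Rightarrow> bool list list \<Rightarrow> bool list set" where
  "code l P = {map (\<lambda>r. odd (card {b. b < l \<and> r ! b \<and> c ! b})) P | c. length c = l}"

definition weight_enum :: "bool list set \<Rightarrow> complex \<Rightarrow> complex" where
  "weight_enum C \<zeta> = (\<Sum>c\<in>C. \<zeta> ^ hweight c)"

definition alpha :: "nat \<Rightarrow> bool list list \<Rightarrow> real \<Rightarrow> complex" where
  "alpha l P \<theta> = (1 / of_nat (card (code l P))) * exp (\<i> * of_real \<theta> * of_nat (length P))
      * weight_enum (code l P) (exp (- 2 * \<i> * of_real \<theta>))"

fun lex_less :: "bool list \<Rightarrow> bool list \<Rightarrow> bool" where
  "lex_less [] _ = False"
| "lex_less _ [] = False"
| "lex_less (a # as) (b # bs) = ((\<not> a \<and> b) \<or> (a = b \<and> lex_less as bs))"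

definition proj :: "bool list list \<Rightarrow> bool list \<Rightarrow> bool list list" where
  "proj P x = map (\<lambda>a. if lex_less (vadd a x) a then vadd a x else a) P"

end

theory Submission imports Defs begin

fun dotl :: "bool list \<Rightarrow> bool list \<Rightarrow> bool" where
  "dotl (a # as) (b # bs) = ((a \<and> b) \<noteq> dotl as bs)"
| "dotl _ _ = False"

definition sg :: "bool \<Rightarrow> complex" where "sg b = (if b then -1 else 1)"

definition V :: "nat \<Rightarrow> bool list set" where "V l = {c. length c = l}"

definition lam :: "bool list list \<Rightarrow> bool list \<Rightarrow> complex" where
  "lam Q c = sum_list (map (\<lambda>r. sg (dotl c r)) Q)"

lemma dotl_comm: "dotl a b = dotl b a"
  by (induction a b rule: dotl.induct) auto

lemma vadd_Cons[simp]: "vadd (a # as) (b # bs) = (a \<noteq> b) # vadd as bs"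
  by (simp add: vadd_def)
lemma vadd_Nil[simp]: "vadd [] bs = []" "vadd as [] = []"
  by (auto simp: vadd_def)
lemma length_vadd[simp]: "length (vadd a b) = min (length a) (length b)"
  by (simp add: vadd_def)

lemma dotl_vadd: "length c = length y \<Longrightarrow> length y = length z \<Longrightarrow>
   dotl c (vadd y z) = (dotl c y \<noteq> dotl c z)"
proof (induction c arbitrary: y z)
  case Nil then show ?case by simp
next
  case (Cons a c)
  then obtain b y' d z' where "y = b # y'" "z = d # z'"
    by (metis length_Suc_conv)
  with Cons show ?case by auto
qed

lemma sg_neq: "sg (a \<noteq> b) = sg a * sg b"
  by (auto simp: sg_def)

lemma dotl_zero[simp]: "dotl c (replicate k False) = False"
proof (induction c arbitrary: k)
  case (Cons a c) then show ?case by (cases k) auto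
qed simp

lemma V_Suc: "V (Suc l) = (\<lambda>c. True # c) ` V l \<union> (\<lambda>c. False # c) ` V l"
  by (auto simp: V_def length_Suc_conv image_iff)

lemma finite_V[simp]: "finite (V l)"
  by (induction l) (auto simp: V_Suc, simp add: V_def)

lemma sum_V_Suc: "(\<Sum>c\<in>V (Suc l). f c) = (\<Sum>c\<in>V l. f (True # c) + f (False # c))"
proof -
  have "(\<Sum>c\<in>V (Suc l). f c) = (\<Sum>c\<in>(\<lambda>c. True # c) ` V l. f c) + (\<Sum>c\<in>(\<lambda>c. False # c) ` V l. f c)"
    unfolding V_Suc by (rule sum.union_disjoint) auto
  also have "\<dots> = (\<Sum>c\<in>V l. f (True # c)) + (\<Sum>c\<in>V l. f (False # c))"
    by (simp add: sum.reindex)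
  finally show ?thesis by (simp add: sum.distrib)
qed

lemma card_V: "card (V l) = 2 ^ l"
proof (induction l)
  case 0 then show ?case by (simp add: V_def)
next
  case (Suc l)
  have "card (V (Suc l)) = card ((\<lambda>c. True # c) ` V l) + card ((\<lambda>c. False # c) ` V l)"
    unfolding V_Suc by (rule card_Un_disjoint) auto
  also have "\<dots> = 2 * card (V l)" by (simp add: card_image)
  finally show ?case using Suc by simp
qed

lemma orth: "length y = l \<Longrightarrow>
  (\<Sum>c\<in>V l. sg (dotl c y)) = (if y = zerovec l then 2 ^ l else 0)"
proof (induction l arbitrary: y)
  case 0 then show ?case by (simp add: V_def zerovec_def sg_def)
next
  case (Suc l)
  then obtain b y' where y: "y = b # y'" "length y' = l" by (metis length_Suc_conv)
  have "(\<Sum>c\<in>V (Suc l). sg (dotl c y)) = (\<Sum>c\<in>V l. (sg b + 1) * sg (dotl c y'))"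
    unfolding sum_V_Suc y(1) by (intro sum.cong) (auto simp: sg_def algebra_simps)
  also have "\<dots> = (sg b + 1) * (\<Sum>c\<in>V l. sg (dotl c y'))" by (simp add: sum_distrib_left)
  finally show ?case
    using Suc.IH[OF y(2)] by (auto simp: y zerovec_def sg_def)
qed


lemma sg_eq_not: "sg (a = (\<not> b)) = sg a * sg b"
  by (auto simp: sg_def)

lemma sum_rows: "(\<Sum>a<length P. f (P ! a)) = sum_list (map f P)"
  by (simp add: sum_list_sum_nth atLeast0LessThan)

lemma Hpow:
  assumes rows: "\<forall>row\<in>set P. length row = l"
  shows "length y = l \<Longrightarrow> (hamil P ^^ k) (ket (zerovec l)) y =
     (\<Sum>c\<in>V l. sg (dotl c y) * lam P c ^ k) / 2 ^ l"
proof (induction k arbitrary: y)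
  case 0
  then show ?case using orth[OF 0] by (simp add: ket_def)
next
  case (Suc k)
  have "(hamil P ^^ Suc k) (ket (zerovec l)) y =
     (\<Sum>a<length P. (hamil P ^^ k) (ket (zerovec l)) (vadd y (P ! a)))"
    by (simp add: hamil_def)
  also have "\<dots> = (\<Sum>a<length P. (\<Sum>c\<in>V l. sg (dotl c y) * lam P c ^ k * sg (dotl c (P ! a))) / 2 ^ l)"
  proof (rule sum.cong[OF refl])
    fix a assume a: "a \<in> {..<length P}"
    then have len: "length (P ! a) = l" using rows by auto
    show "(hamil P ^^ k) (ket (zerovec l)) (vadd y (P ! a)) =
          (\<Sum>c\<in>V l. sg (dotl c y) * lam P c ^ k * sg (dotl c (P ! a))) / 2 ^ l"
      using Suc len by (simp add: dotl_vadd sg_eq_not V_def mult_ac)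
  qed
  also have "\<dots> = (\<Sum>c\<in>V l. sg (dotl c y) * lam P c ^ k * (\<Sum>a<length P. sg (dotl c (P ! a)))) / 2 ^ l"
    by (simp add: sum_divide_distrib[symmetric] sum_distrib_left sum.swap[of _ "{..<length P}"])
  also have "\<dots> = (\<Sum>c\<in>V l. sg (dotl c y) * lam P c ^ Suc k) / 2 ^ l"
    by (simp add: lam_def sum_list_sum_nth atLeast0LessThan mult_ac)
  finally show ?case .
qed

lemma amp_formula:
  assumes rows: "\<forall>row\<in>set P. length row = l" and y: "length y = l"
  shows "amp l P \<theta> y = (\<Sum>c\<in>V l. sg (dotl c y) * exp (\<i> * of_real \<theta> * lam P c)) / 2 ^ l"
proof -
  have "(\<lambda>k. (\<i> * of_real \<theta>) ^ k / of_nat (fact k) * ((hamil P ^^ k) (ket (zerovec l))) y)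
     = (\<lambda>k. \<Sum>c\<in>V l. sg (dotl c y) / 2 ^ l * ((\<i> * of_real \<theta> * lam P c) ^ k /\<^sub>R fact k))"
    by (rule ext) (simp add: Hpow[OF rows y] sum_divide_distrib sum_distrib_left scaleR_conv_of_real
          power_mult_distrib field_simps)
  moreover have "(\<lambda>k. \<Sum>c\<in>V l. sg (dotl c y) / 2 ^ l * ((\<i> * of_real \<theta> * lam P c) ^ k /\<^sub>R fact k))
      sums (\<Sum>c\<in>V l. sg (dotl c y) / 2 ^ l * exp (\<i> * of_real \<theta> * lam P c))"
    by (intro sums_sum sums_mult exp_converges)
  ultimately show ?thesis
    unfolding amp_def exp_iH_def by (simp add: sums_iff sum_divide_distrib)
qed


lemma card_dotl: "length r = l \<Longrightarrow> length c = l \<Longrightarrow>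
   odd (card {b. b < l \<and> r ! b \<and> c ! b}) = dotl r c"
proof (induction r arbitrary: c l)
  case Nil then show ?case by simp
next
  case (Cons a r)
  then obtain d cs m where c: "c = d # cs" "l = Suc m" "length cs = m" "length r = m"
    by (metis length_Suc_conv)
  have S: "{b. b < Suc m \<and> (a # r) ! b \<and> (d # cs) ! b} =
     (if a \<and> d then insert 0 else id) (Suc ` {b. b < m \<and> r ! b \<and> cs ! b})"
    by (rule set_eqI, case_tac x) auto
  have fin: "finite (Suc ` {b. b < m \<and> r ! b \<and> cs ! b})" by simp
  show ?case
    using Cons.IH[OF c(4) c(3)] unfolding c(1,2) S
    by (cases "a \<and> d") (auto simp: card_image card_insert_if[OF fin])
qed

definition M :: "bool list list \<Rightarrow> bool list \<Rightarrow> bool list" where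
  "M Q c = map (\<lambda>r. dotl r c) Q"

lemma code_eq: "\<forall>row\<in>set Q. length row = l \<Longrightarrow> code l Q = M Q ` V l"
proof -
  assume rows: "\<forall>row\<in>set Q. length row = l"
  have eq: "map (\<lambda>r. odd (card {b. b < l \<and> r ! b \<and> c ! b})) Q = M Q c" if "length c = l" for c
    using rows that by (auto simp: M_def card_dotl)
  show ?thesis
  proof (intro set_eqI iffI)
    fix y assume "y \<in> code l Q"
    then obtain c where c: "length c = l" "y = map (\<lambda>r. odd (card {b. b < l \<and> r ! b \<and> c ! b})) Q"
      by (auto simp: code_def)
    then show "y \<in> M Q ` V l" using eq[OF c(1)] by (auto simp: V_def)
  next
    fix y assume "y \<in> M Q ` V l"
    then obtain c where c: "length c = l" "y = M Q c" by (auto simp: V_def)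
    have "y = map (\<lambda>r. odd (card {b. b < l \<and> r ! b \<and> c ! b})) Q \<and> length c = l"
      using c eq[OF c(1)] by simp
    then show "y \<in> code l Q" unfolding code_def by blast
  qed
qed

lemma hweight_Cons[simp]: "hweight (b # w) = (if b then 1 else 0) + hweight w"
  by (simp add: hweight_def)
lemma hweight_Nil[simp]: "hweight [] = 0" by (simp add: hweight_def)

lemma lam_hw: "lam Q c = of_nat (length Q) - 2 * of_nat (hweight (M Q c))"
  by (induction Q) (auto simp: lam_def M_def sg_def dotl_comm)

lemma exp_lam: "exp (\<i> * of_real \<theta> * lam Q c) =
   exp (\<i> * of_real \<theta> * of_nat (length Q)) * exp (- 2 * \<i> * of_real \<theta>) ^ hweight (M Q c)"
proof -
  have "exp (\<i> * of_real \<theta> * lam Q c) = exp (\<i> * of_real \<theta> * of_nat (length Q) +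
     of_nat (hweight (M Q c)) * (- 2 * \<i> * of_real \<theta>))"
    by (simp add: lam_hw algebra_simps)
  then show ?thesis by (simp only: exp_add exp_of_nat_mult)
qed

lemma dotl_vadd2: "length r = length c \<Longrightarrow> length c = length d \<Longrightarrow>
   dotl r (vadd c d) = (dotl r c \<noteq> dotl r d)"
  by (simp add: dotl_vadd)

lemma M_vadd: "\<forall>row\<in>set Q. length row = l \<Longrightarrow> c \<in> V l \<Longrightarrow> d \<in> V l \<Longrightarrow>
   M Q (vadd c d) = vadd (M Q c) (M Q d)"
proof -
  assume rows: "\<forall>row\<in>set Q. length row = l" and cd: "c \<in> V l" "d \<in> V l"
  have vm: "vadd (map f Q') (map g Q') = map (\<lambda>r. f r \<noteq> g r) Q'" for f g and Q' :: "bool list list"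
    by (induction Q') auto
  show ?thesis unfolding M_def vm using rows cd
    by (auto simp: V_def dotl_vadd2 intro!: map_cong)
qed

lemma vadd_self: "vadd c c = replicate (length c) False"
  by (induction c) auto
lemma vadd_invol: "length c = length d \<Longrightarrow> vadd c (vadd c d) = d"
  by (induction c arbitrary: d) (auto, case_tac d, auto)
lemma vadd_zero: "length c = k \<Longrightarrow> vadd c (replicate k False) = c"
  by (induction c arbitrary: k) auto
lemma M_zero: "M Q (replicate l False) = replicate (length Q) False"
  by (induction Q) (auto simp: M_def)
lemma length_M[simp]: "length (M Q c) = length Q" by (simp add: M_def)

lemma fiber_card:
  assumes rows: "\<forall>row\<in>set Q. length row = l" and c0: "c0 \<in> V l"
  shows "card {c \<in> V l. M Q c = M Q c0} = card {d \<in> V l. M Q d = M Q (replicate l False)}"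
proof -
  have "bij_betw (vadd c0) {d \<in> V l. M Q d = M Q (replicate l False)} {c \<in> V l. M Q c = M Q c0}"
  proof (rule bij_betw_byWitness[where f'="vadd c0"])
    show "\<forall>a\<in>{d \<in> V l. M Q d = M Q (replicate l False)}. vadd c0 (vadd c0 a) = a"
      using c0 by (auto simp: V_def vadd_invol)
    show "\<forall>a\<in>{c \<in> V l. M Q c = M Q c0}. vadd c0 (vadd c0 a) = a"
      using c0 by (auto simp: V_def vadd_invol)
    show "vadd c0 ` {d \<in> V l. M Q d = M Q (replicate l False)} \<subseteq> {c \<in> V l. M Q c = M Q c0}"
      using c0 by (auto simp: M_vadd[OF rows] M_zero vadd_zero) (auto simp: V_def)
    show "vadd c0 ` {c \<in> V l. M Q c = M Q c0} \<subseteq> {d \<in> V l. M Q d = M Q (replicate l False)}"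
      using c0 by (auto simp: M_vadd[OF rows] M_zero vadd_self) (auto simp: V_def)
  qed
  then show ?thesis by (simp add: bij_betw_same_card)
qed

lemma sum_M:
  assumes rows: "\<forall>row\<in>set Q. length row = l"
  defines "K \<equiv> card {d \<in> V l. M Q d = M Q (replicate l False)}"
  shows "(\<Sum>c\<in>V l. g (M Q c)) = of_nat K * (\<Sum>w\<in>M Q ` V l. g w)"
proof -
  have "(\<Sum>c\<in>V l. g (M Q c)) = (\<Sum>w\<in>M Q ` V l. \<Sum>c\<in>{c \<in> V l. M Q c = w}. g (M Q c))"
    by (rule sum.image_gen) simp
  also have "\<dots> = (\<Sum>w\<in>M Q ` V l. of_nat K * g w)"
  proof (rule sum.cong[OF refl])
    fix w assume "w \<in> M Q ` V l"
    then obtain c0 where c0: "c0 \<in> V l" "w = M Q c0" by auto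
    have "(\<Sum>c\<in>{c \<in> V l. M Q c = w}. g (M Q c)) = (\<Sum>c\<in>{c \<in> V l. M Q c = w}. g w)"
      by simp
    also have "\<dots> = of_nat K * g w"
      using fiber_card[OF rows c0(1)] c0 by (simp add: K_def)
    finally show "(\<Sum>c\<in>{c \<in> V l. M Q c = w}. g (M Q c)) = of_nat K * g w" .
  qed
  finally show ?thesis by (simp add: sum_distrib_left)
qed

lemma alpha_formula:
  assumes rows: "\<forall>row\<in>set Q. length row = l"
  shows "alpha l Q \<theta> = (\<Sum>c\<in>V l. exp (\<i> * of_real \<theta> * lam Q c)) / 2 ^ l"
proof -
  define K where "K = card {d \<in> V l. M Q d = M Q (replicate l False)}"
  define C where "C = M Q ` V l"
  have one: "(2::complex) ^ l = of_nat K * of_nat (card C)"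
    using sum_M[OF rows, of "\<lambda>_. (1::complex)"] by (simp add: card_V K_def C_def)
  have cC: "card C > 0" by (rule ccontr) (use one in simp)
  have K0: "K > 0" by (rule ccontr) (use one in simp)
  have "(\<Sum>c\<in>V l. exp (\<i> * of_real \<theta> * lam Q c)) =
     exp (\<i> * of_real \<theta> * of_nat (length Q)) * (\<Sum>c\<in>V l. exp (- 2 * \<i> * of_real \<theta>) ^ hweight (M Q c))"
    by (simp add: exp_lam sum_distrib_left)
  also have "\<dots> = exp (\<i> * of_real \<theta> * of_nat (length Q)) * (of_nat K * weight_enum C (exp (- 2 * \<i> * of_real \<theta>)))"
    using sum_M[OF rows, of "\<lambda>w. exp (- 2 * \<i> * of_real \<theta>) ^ hweight w"]
    by (simp add: K_def C_def weight_enum_def)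
  finally show ?thesis
    unfolding alpha_def code_eq[OF rows] C_def[symmetric] using one cC K0
    by (simp add: field_simps)
qed


lemma lexrow: "length a = length (ys @ True # rest) \<Longrightarrow> \<forall>b\<in>set ys. \<not> b \<Longrightarrow>
   lex_less (vadd a (ys @ True # rest)) a = a ! length ys \<and>
   vadd a (ys @ True # rest) ! length ys = (\<not> a ! length ys)"
proof (induction ys arbitrary: a)
  case Nil
  then obtain b a' where "a = b # a'" by (cases a) auto
  then show ?case by auto
next
  case (Cons y ys)
  then obtain b a' where a: "a = b # a'" by (cases a) auto
  have lex_same: "lex_less (u # s) (u # t) = lex_less s t" for u s t by auto
  show ?case using Cons a by (auto simp: lex_same)
qed

lemma dotl_unit: "length w = j + Suc m \<Longrightarrow>
   dotl w (replicate j False @ True # replicate m False) = w ! j"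
proof (induction j arbitrary: w)
  case 0
  then obtain b w' where "w = b # w'" by (cases w) auto
  then show ?case by simp
next
  case (Suc j)
  then obtain b w' where "w = b # w'" by (cases w) auto
  with Suc show ?case by simp
qed

lemma vadd_invol2: "length c = length d \<Longrightarrow> vadd (vadd c d) d = c"
  by (induction c arbitrary: d) (auto, case_tac d, auto)

lemma lam_map_cong: "(\<And>r. r \<in> set Q \<Longrightarrow> dotl c (f r) = dotl d r) \<Longrightarrow> lam (map f Q) c = lam Q d"
  unfolding lam_def by (simp add: comp_def cong: map_cong)

lemma lam_map_cong2: "(\<And>r. r \<in> set Q \<Longrightarrow> dotl c (f r) = dotl d (f r)) \<Longrightarrow> lam (map f Q) c = lam (map f Q) d"
  unfolding lam_def by (simp add: comp_def cong: map_cong)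

theorem theorem1:
  fixes P :: "bool list list" and l :: nat and \<theta> :: real
  assumes "\<forall>row\<in>set P. length row = l"
  shows "amp l P \<theta> (zerovec l) = alpha l P \<theta> \<and>
         (\<forall>x. length x = l \<and> x \<noteq> zerovec l \<longrightarrow>
           amp l P \<theta> x = alpha l (proj P x) \<theta> - alpha l P \<theta>)"
proof (intro conjI allI impI)
  note rows = assms
  define E where "E c = exp (\<i> * of_real \<theta> * lam P c)" for c
  show "amp l P \<theta> (zerovec l) = alpha l P \<theta>"
    using amp_formula[OF rows, of "zerovec l"] alpha_formula[OF rows]
    by (simp add: zerovec_def sg_def)
  fix x assume x: "length x = l \<and> x \<noteq> zerovec l"
  then have "True \<in> set x" by (auto simp: zerovec_def replicate_length_same[symmetric] intro: replicate_eqI)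
  then obtain ys rest where xs: "x = ys @ True # rest" "True \<notin> set ys"
    using split_list_first by metis
  define j where "j = length ys"
  define e where "e = replicate j False @ True # replicate (l - Suc j) False"
  have jl: "j < l" using x xs by (simp add: j_def)
  have ysF: "\<forall>b\<in>set ys. \<not> b" using xs by auto
  define f where "f a = (if lex_less (vadd a x) a then vadd a x else a)" for a
  have fj: "f a ! j = False" "length (f a) = l" if "length a = l" for a
    using lexrow[of a ys rest, OF _ ysF] that x xs by (auto simp: f_def j_def)
  define Q where "Q = proj P x"
  have Qf: "Q = map f P" by (simp add: Q_def proj_def f_def)
  have rowsQ: "\<forall>row\<in>set Q. length row = l" using fj(2) rows by (auto simp: Qf)
  define E' where "E' c = exp (\<i> * of_real \<theta> * lam Q c)" for c
  have lenE: "length e = l" using jl by (simp add: e_def)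
  have dote: "dotl w e = w ! j" if "length w = l" for w
    unfolding e_def by (rule dotl_unit) (use that jl in simp)
  have lamQe: "lam Q (vadd c e) = lam Q c" if c: "c \<in> V l" for c
    unfolding Qf
  proof (rule lam_map_cong2)
    fix r assume r: "r \<in> set P"
    then have lr: "length r = l" using rows by auto
    have "dotl (vadd c e) (f r) = dotl (f r) (vadd c e)" by (rule dotl_comm)
    also have "\<dots> = (dotl (f r) c \<noteq> dotl (f r) e)"
      using c lenE fj(2)[OF lr] by (simp add: V_def dotl_vadd)
    also have "\<dots> = dotl c (f r)" using dote[OF fj(2)[OF lr]] fj(1)[OF lr] by (simp add: dotl_comm)
    finally show "dotl (vadd c e) (f r) = dotl c (f r)" .
  qed
  have dotx: "dotl (vadd c e) x = (\<not> dotl c x)" if c: "c \<in> V l" for c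
  proof -
    have "dotl (vadd c e) x = dotl x (vadd c e)" by (rule dotl_comm)
    also have "\<dots> = (dotl x c \<noteq> dotl x e)" using c lenE x by (simp add: V_def dotl_vadd)
    also have "dotl x e = True" using dote[of x] x xs by (simp add: j_def)
    finally show ?thesis by (simp add: dotl_comm)
  qed
  have lamQ0: "lam Q c = lam P c" if c: "c \<in> V l" and cx: "\<not> dotl c x" for c
    unfolding Qf
  proof (rule lam_map_cong)
    fix r assume r: "r \<in> set P"
    then have lr: "length r = l" using rows by auto
    show "dotl c (f r) = dotl c r"
      using c cx lr x by (auto simp: f_def V_def dotl_vadd)
  qed
  define V0 where "V0 = {c \<in> V l. \<not> dotl c x}"
  define V1 where "V1 = {c \<in> V l. dotl c x}"
  have VU: "V l = V0 \<union> V1" "V0 \<inter> V1 = {}" "finite V0" "finite V1"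
    by (auto simp: V0_def V1_def)
  have bij: "bij_betw (\<lambda>c. vadd c e) V0 V1"
  proof (rule bij_betw_byWitness[where f'="\<lambda>c. vadd c e"])
    show "\<forall>a\<in>V0. vadd (vadd a e) e = a" using lenE by (auto simp: V0_def V_def vadd_invol2)
    show "\<forall>a\<in>V1. vadd (vadd a e) e = a" using lenE by (auto simp: V1_def V_def vadd_invol2)
    show "(\<lambda>c. vadd c e) ` V0 \<subseteq> V1" using lenE dotx by (auto simp: V0_def V1_def V_def)
    show "(\<lambda>c. vadd c e) ` V1 \<subseteq> V0" using lenE dotx by (auto simp: V0_def V1_def V_def)
  qed
  have "(\<Sum>c\<in>V1. E' c) = (\<Sum>c\<in>V0. E' (vadd c e))"
    by (rule sum.reindex_bij_betw[OF bij, symmetric])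
  also have "\<dots> = (\<Sum>c\<in>V0. E' c)" by (rule sum.cong) (auto simp: E'_def lamQe V0_def)
  finally have s1: "(\<Sum>c\<in>V1. E' c) = (\<Sum>c\<in>V0. E' c)" .
  have s0: "(\<Sum>c\<in>V0. E' c) = (\<Sum>c\<in>V0. E c)" by (rule sum.cong) (auto simp: E'_def E_def lamQ0 V0_def)
  have LHS: "(\<Sum>c\<in>V l. E' c) = 2 * (\<Sum>c\<in>V0. E c)"
    using s1 s0 by (simp add: VU sum.union_disjoint)
  have RHS: "(\<Sum>c\<in>V l. sg (dotl c x) * E c) + (\<Sum>c\<in>V l. E c) = 2 * (\<Sum>c\<in>V0. E c)"
  proof -
    have "(\<Sum>c\<in>V l. sg (dotl c x) * E c) + (\<Sum>c\<in>V l. E c) = (\<Sum>c\<in>V l. (sg (dotl c x) + 1) * E c)"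
      by (simp add: sum.distrib algebra_simps)
    also have "\<dots> = (\<Sum>c\<in>V0. (sg (dotl c x) + 1) * E c) + (\<Sum>c\<in>V1. (sg (dotl c x) + 1) * E c)"
      by (simp add: VU sum.union_disjoint)
    also have "\<dots> = (\<Sum>c\<in>V0. 2 * E c)"
      by (simp add: V0_def V1_def sg_def)
    finally show ?thesis by (simp add: sum_distrib_left)
  qed
  show "amp l P \<theta> x = alpha l (proj P x) \<theta> - alpha l P \<theta>"
    unfolding amp_formula[OF rows x[THEN conjunct1]] alpha_formula[OF rows] Q_def[symmetric] alpha_formula[OF rowsQ]
    using LHS RHS x unfolding E_def E'_def by (simp add: field_simps)
qed

end
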